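(* Let $p, p' > 1$ be real numbers with $\frac{1}{p}+\frac{1}{p'}=1$, let $\mu,\nu$ be probability distributions on $S$ with $\nu(s)>0$ for all $s\in S$, and let $\rho$ be a probability distribution on $\{1,\dots,N\}$. Then for every joint stationary strategy $\boldsymbol{\pi}=(\pi^1,\dots,\pi^N)$ and every tuple of functions $(v^1,\dots,v^N)$ with $v^i:S\to\mathbb{R}$, $$\Big(\sum_{i=1}^N \rho(i)\,\big\|v^{*i}_{\boldsymbol{\pi}^{-i}} - v^i_{\boldsymbol{\pi}}\big\|_{\mu,p}^p\Big)^{1/p} \le \frac{2^{1/p'}\, C_\infty(\mu,\nu)^{1/p}}{1-\gamma}\left[\sum_{i=1}^N \rho(i)\Big(\big\|\mathcal{T}^{*i}_{\boldsymbol{\pi}^{-i}} v^i - v^i\big\|_{\nu,p}^p + \big\|\mathcal{T}^i_{\boldsymbol{\pi}} v^i - v^i\big\|_{\nu,p}^p\Big)\right]^{1/p}.$$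
   Context: An $N$-player Markov game has a finite state space $S$, finite nonempty action sets $A^i(s)$ for each player $i\in\{1,\dots,N\}$ and state $s$, rewards $r^i(s,\mathbf a)\in\mathbb{R}$ for joint actions $\mathbf a=(a^1,\dots,a^N)$, a transition kernel $p(s'|s,\mathbf a)$, and a discount factor $\gamma\in[0,1)$. We write $\mathbf a=(a^i,\mathbf a^{-i})$ where $\mathbf a^{-i}$ is the joint action of all players other than $i$. A stationary strategy $\pi^i$ of player $i$ assigns to each $s$ a probability distribution $\pi^i(\cdot|s)$ on $A^i(s)$; a joint strategy is $\boldsymbol\pi=(\pi^1,\dots,\pi^N)=(\pi^i,\boldsymbol\pi^{-i})$, with actions drawn independently across players. Define $\mathcal P_{\boldsymbol\pi}(s'|s)=E_{\mathbf a\sim\boldsymbol\pi(\cdot|s)}[p(s'|s,\mathbf a)]$, $r^i_{\boldsymbol\pi}(s)=E_{\mathbf a\sim\boldsymbol\pi(\cdot|s)}[r^i(s,\mathbf a)]$, $\mathcal P_{\boldsymbol\pi^{-i}}(s'|s,a^i)=E_{\mathbf a^{-i}\sim\boldsymbol\pi^{-i}(\cdot|s)}[p(s'|s,a^i,\mathbf a^{-i})]$, $r^i_{\boldsymbol\pi^{-i}}(s,a^i)=E_{\mathbf a^{-i}\sim\boldsymbol\pi^{-i}(\cdot|s)}[r^i(s,a^i,\mathbf a^{-i})]$. The value of $\boldsymbol\pi$ for player $i$ is $v^i_{\boldsymbol\pi}=(\mathcal I-\gamma\mathcal P_{\boldsymbol\pi})^{-1}r^i_{\boldsymbol\pi}$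 (vectors/matrices indexed by $S$, $\mathcal I$ the identity). The best-response value is $v^{*i}_{\boldsymbol\pi^{-i}}=\max_{\tilde\pi^i} v^i_{\tilde\pi^i,\boldsymbol\pi^{-i}}$ (pointwise maximum over stationary strategies of player $i$). For $v:S\to\mathbb R$, the Bellman operators are $\mathcal T^i_{\boldsymbol\pi}v(s)=r^i_{\boldsymbol\pi}(s)+\gamma\sum_{s'}\mathcal P_{\boldsymbol\pi}(s'|s)v(s')$ and $\mathcal T^{*i}_{\boldsymbol\pi^{-i}}v(s)=\max_{a^i\in A^i(s)}\big[r^i_{\boldsymbol\pi^{-i}}(s,a^i)+\gamma\sum_{s'}\mathcal P_{\boldsymbol\pi^{-i}}(s'|s,a^i)v(s')\big]$. For a distribution $\mu$ on $S$ and $f:S\to\mathbb R$, $\|f\|_{\mu,p}=(\sum_{s}\mu(s)|f(s)|^p)^{1/p}$. The concentrability coefficient of a joint strategy $\boldsymbol\pi$ is $C_\infty(\mu,\nu,\boldsymbol\pi)=\max_{s\in S}\frac{[(1-\gamma)\mu^T(\mathcal I-\gamma\mathcal P_{\boldsymbol\pi})^{-1}](s)}{\nu(s)}$ (the sup-norm of the Radon–Nikodym derivative of the distribution $(1-\gamma)\mu^T(\mathcal I-\gamma\mathcal P_{\boldsymbol\pi})^{-1}$ with respect to $\nu$), and $C_\infty(\mu,\nu)=\sup_{\boldsymbol\pi}C_\infty(\mu,\nu,\boldsymbol\pi)$, the supremum over all joint stationary strategies. *)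

theory Defs
  imports "HOL-Analysis.Analysis"
begin

text \<open>Players are 1..N; A i s is the action set of player i
 in state s; joint actions are functions nat => 'a (extensional on {1..N});
 K s a s' is the transition kernel p(s'|s,a); r i s a the reward of player i;
 gam the discount factor.\<close>

definition joint_actions :: "nat \<Rightarrow> (nat \<Rightarrow> 's \<Rightarrow> 'a set) \<Rightarrow> 's \<Rightarrow> (nat \<Rightarrow> 'a) set" where
  "joint_actions N A s = PiE {1..N} (\<lambda>i. A i s)"

definition jprob :: "nat \<Rightarrow> (nat \<Rightarrow> 's \<Rightarrow> 'a \<Rightarrow> real) \<Rightarrow> 's \<Rightarrow> (nat \<Rightarrow> 'a) \<Rightarrow> real" where
  "jprob N \<pi> s a = (\<Prod>j\<in>{1..N}. \<pi> j s (a j))"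

definition is_strategy :: "(nat \<Rightarrow> 's \<Rightarrow> 'a set) \<Rightarrow> nat \<Rightarrow> ('s \<Rightarrow> 'a \<Rightarrow> real) \<Rightarrow> bool" where
  "is_strategy A i \<sigma> \<longleftrightarrow> (\<forall>s. (\<forall>a\<in>A i s. 0 \<le> \<sigma> s a) \<and> sum (\<sigma> s) (A i s) = 1)"

definition is_joint_strategy :: "nat \<Rightarrow> (nat \<Rightarrow> 's \<Rightarrow> 'a set) \<Rightarrow> (nat \<Rightarrow> 's \<Rightarrow> 'a \<Rightarrow> real) \<Rightarrow> bool" where
  "is_joint_strategy N A \<pi> \<longleftrightarrow> (\<forall>i\<in>{1..N}. is_strategy A i (\<pi> i))"

definition P_pi :: "nat \<Rightarrow> (nat \<Rightarrow> 's \<Rightarrow> 'a set) \<Rightarrow> ('s \<Rightarrow> (nat \<Rightarrow> 'a) \<Rightarrow> 's \<Rightarrow> real)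
    \<Rightarrow> (nat \<Rightarrow> 's \<Rightarrow> 'a \<Rightarrow> real) \<Rightarrow> 's \<Rightarrow> 's \<Rightarrow> real" where
  "P_pi N A K \<pi> s s' = (\<Sum>a\<in>joint_actions N A s. jprob N \<pi> s a * K s a s')"

definition r_pi :: "nat \<Rightarrow> (nat \<Rightarrow> 's \<Rightarrow> 'a set) \<Rightarrow> (nat \<Rightarrow> 's \<Rightarrow> (nat \<Rightarrow> 'a) \<Rightarrow> real)
    \<Rightarrow> nat \<Rightarrow> (nat \<Rightarrow> 's \<Rightarrow> 'a \<Rightarrow> real) \<Rightarrow> 's \<Rightarrow> real" where
  "r_pi N A r i \<pi> s = (\<Sum>a\<in>joint_actions N A s. jprob N \<pi> s a * r i s a)"

definition P_mi :: "nat \<Rightarrow> (nat \<Rightarrow> 's \<Rightarrow> 'a set) \<Rightarrow> ('s \<Rightarrow> (nat \<Rightarrow> 'a) \<Rightarrow> 's \<Rightarrow> real)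
    \<Rightarrow> nat \<Rightarrow> (nat \<Rightarrow> 's \<Rightarrow> 'a \<Rightarrow> real) \<Rightarrow> 's \<Rightarrow> 'a \<Rightarrow> 's \<Rightarrow> real" where
  "P_mi N A K i \<pi> s ai s' =
     (\<Sum>a\<in>{a\<in>joint_actions N A s. a i = ai}. (\<Prod>j\<in>{1..N}-{i}. \<pi> j s (a j)) * K s a s')"

definition r_mi :: "nat \<Rightarrow> (nat \<Rightarrow> 's \<Rightarrow> 'a set) \<Rightarrow> (nat \<Rightarrow> 's \<Rightarrow> (nat \<Rightarrow> 'a) \<Rightarrow> real)
    \<Rightarrow> nat \<Rightarrow> (nat \<Rightarrow> 's \<Rightarrow> 'a \<Rightarrow> real) \<Rightarrow> 's \<Rightarrow> 'a \<Rightarrow> real" where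
  "r_mi N A r i \<pi> s ai =
     (\<Sum>a\<in>{a\<in>joint_actions N A s. a i = ai}. (\<Prod>j\<in>{1..N}-{i}. \<pi> j s (a j)) * r i s a)"

definition Pmat :: "nat \<Rightarrow> (nat \<Rightarrow> 's::finite \<Rightarrow> 'a set) \<Rightarrow> ('s \<Rightarrow> (nat \<Rightarrow> 'a) \<Rightarrow> 's \<Rightarrow> real)
    \<Rightarrow> (nat \<Rightarrow> 's \<Rightarrow> 'a \<Rightarrow> real) \<Rightarrow> real^'s^'s" where
  "Pmat N A K \<pi> = (\<chi> s s'. P_pi N A K \<pi> s s')"

definition resolvent :: "nat \<Rightarrow> (nat \<Rightarrow> 's::finite \<Rightarrow> 'a set) \<Rightarrow> ('s \<Rightarrow> (nat \<Rightarrow> 'a) \<Rightarrow> 's \<Rightarrow> real)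
    \<Rightarrow> real \<Rightarrow> (nat \<Rightarrow> 's \<Rightarrow> 'a \<Rightarrow> real) \<Rightarrow> real^'s^'s" where
  "resolvent N A K gam \<pi> = matrix_inv (mat 1 - gam *\<^sub>R Pmat N A K \<pi>)"

definition game_value :: "nat \<Rightarrow> (nat \<Rightarrow> 's::finite \<Rightarrow> 'a set) \<Rightarrow> ('s \<Rightarrow> (nat \<Rightarrow> 'a) \<Rightarrow> 's \<Rightarrow> real)
    \<Rightarrow> (nat \<Rightarrow> 's \<Rightarrow> (nat \<Rightarrow> 'a) \<Rightarrow> real) \<Rightarrow> real \<Rightarrow> nat \<Rightarrow> (nat \<Rightarrow> 's \<Rightarrow> 'a \<Rightarrow> real) \<Rightarrow> 's \<Rightarrow> real" where
  "game_value N A K r gam i \<pi> s = (resolvent N A K gam \<pi> *v (\<chi> t. r_pi N A r i \<pi> t)) $ s"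

definition best_value :: "nat \<Rightarrow> (nat \<Rightarrow> 's::finite \<Rightarrow> 'a set) \<Rightarrow> ('s \<Rightarrow> (nat \<Rightarrow> 'a) \<Rightarrow> 's \<Rightarrow> real)
    \<Rightarrow> (nat \<Rightarrow> 's \<Rightarrow> (nat \<Rightarrow> 'a) \<Rightarrow> real) \<Rightarrow> real \<Rightarrow> nat \<Rightarrow> (nat \<Rightarrow> 's \<Rightarrow> 'a \<Rightarrow> real) \<Rightarrow> 's \<Rightarrow> real" where
  "best_value N A K r gam i \<pi> s = (SUP \<sigma>\<in>{\<sigma>. is_strategy A i \<sigma>}. game_value N A K r gam i (\<pi>(i := \<sigma>)) s)"

definition bellman :: "nat \<Rightarrow> (nat \<Rightarrow> 's::finite \<Rightarrow> 'a set) \<Rightarrow> ('s \<Rightarrow> (nat \<Rightarrow> 'a) \<Rightarrow> 's \<Rightarrow> real)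
    \<Rightarrow> (nat \<Rightarrow> 's \<Rightarrow> (nat \<Rightarrow> 'a) \<Rightarrow> real) \<Rightarrow> real \<Rightarrow> nat \<Rightarrow> (nat \<Rightarrow> 's \<Rightarrow> 'a \<Rightarrow> real)
    \<Rightarrow> ('s \<Rightarrow> real) \<Rightarrow> 's \<Rightarrow> real" where
  "bellman N A K r gam i \<pi> v s = r_pi N A r i \<pi> s + gam * (\<Sum>s'\<in>UNIV. P_pi N A K \<pi> s s' * v s')"

definition bellman_opt :: "nat \<Rightarrow> (nat \<Rightarrow> 's::finite \<Rightarrow> 'a set) \<Rightarrow> ('s \<Rightarrow> (nat \<Rightarrow> 'a) \<Rightarrow> 's \<Rightarrow> real)
    \<Rightarrow> (nat \<Rightarrow> 's \<Rightarrow> (nat \<Rightarrow> 'a) \<Rightarrow> real) \<Rightarrow> real \<Rightarrow> nat \<Rightarrow> (nat \<Rightarrow> 's \<Rightarrow> 'a \<Rightarrow> real)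
    \<Rightarrow> ('s \<Rightarrow> real) \<Rightarrow> 's \<Rightarrow> real" where
  "bellman_opt N A K r gam i \<pi> v s =
     Max ((\<lambda>ai. r_mi N A r i \<pi> s ai + gam * (\<Sum>s'\<in>UNIV. P_mi N A K i \<pi> s ai s' * v s')) ` A i s)"

definition wnorm :: "('s::finite \<Rightarrow> real) \<Rightarrow> real \<Rightarrow> ('s \<Rightarrow> real) \<Rightarrow> real" where
  "wnorm \<mu> p f = (\<Sum>s\<in>UNIV. \<mu> s * \<bar>f s\<bar> powr p) powr (1 / p)"

definition is_distribution :: "'x set \<Rightarrow> ('x \<Rightarrow> real) \<Rightarrow> bool" where
  "is_distribution X d \<longleftrightarrow> (\<forall>x\<in>X. 0 \<le> d x) \<and> sum d X = 1"

definition conc_pi :: "nat \<Rightarrow> (nat \<Rightarrow> 's::finite \<Rightarrow> 'a set) \<Rightarrow> ('s \<Rightarrow> (nat \<Rightarrow> 'a) \<Rightarrow> 's \<Rightarrow> real)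
    \<Rightarrow> real \<Rightarrow> ('s \<Rightarrow> real) \<Rightarrow> ('s \<Rightarrow> real) \<Rightarrow> (nat \<Rightarrow> 's \<Rightarrow> 'a \<Rightarrow> real) \<Rightarrow> real" where
  "conc_pi N A K gam \<mu> \<nu> \<pi> =
     Max (range (\<lambda>s. (((1 - gam) *\<^sub>R ((\<chi> t. \<mu> t) v* resolvent N A K gam \<pi>)) $ s) / \<nu> s))"

definition conc :: "nat \<Rightarrow> (nat \<Rightarrow> 's::finite \<Rightarrow> 'a set) \<Rightarrow> ('s \<Rightarrow> (nat \<Rightarrow> 'a) \<Rightarrow> 's \<Rightarrow> real)
    \<Rightarrow> real \<Rightarrow> ('s \<Rightarrow> real) \<Rightarrow> ('s \<Rightarrow> real) \<Rightarrow> real" where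
  "conc N A K gam \<mu> \<nu> = (SUP \<pi>\<in>{\<pi>. is_joint_strategy N A \<pi>}. conc_pi N A K gam \<mu> \<nu> \<pi>)"

end

theory Submission
  imports Defs
begin


lemma powr_convex0:
  fixes p :: real assumes p: "p \<ge> 1"
  shows "convex_on {0..} (\<lambda>x. x powr p)"
proof (rule convex_onI)
  show "convex {0::real..}" by (simp add: convex_real_interval)
  fix t x y :: real assume t: "0 < t" "t < 1" and xy: "x \<in> {0..}" "y \<in> {0..}"
  show "((1 - t) *\<^sub>R x + t *\<^sub>R y) powr p \<le> (1 - t) * x powr p + t * y powr p"
  proof (cases "x = 0 \<or> y = 0")
    case True
    have aux: "c powr p \<le> c" if "0 \<le> c" "c \<le> 1" for c :: real
    proof (cases "c = 0")
      case False
      then have "c powr p \<le> c powr 1" using that p by (intro powr_mono') auto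
      then show ?thesis using that by simp
    qed (use p in simp)
    show ?thesis
    proof (cases "x = 0")
      case True
      have "(t * y) powr p = t powr p * y powr p" using t xy by (simp add: powr_mult)
      also have "\<dots> \<le> t * y powr p" using aux[of t] t by (intro mult_right_mono) auto
      finally show ?thesis using True by simp
    next
      case False
      with True have "y = 0" by simp
      have "((1-t) * x) powr p = (1-t) powr p * x powr p" using t xy by (simp add: powr_mult)
      also have "\<dots> \<le> (1-t) * x powr p" using aux[of "1-t"] t by (intro mult_right_mono) auto
      finally show ?thesis using \<open>y = 0\<close> by simp
    qed
  next
    case False
    then have "x \<in> {0<..}" "y \<in> {0<..}" using xy by auto
    from convex_onD[OF powr_convex[OF p], of t x y, OF _ _ this] t
    show ?thesis by simp
  qed
qed



locale smat =
  fixes P :: "real^'n::finite^'n" and g :: real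
  assumes nn: "\<And>s t. 0 \<le> P$s$t" and rs: "\<And>s. (\<Sum>t\<in>UNIV. P$s$t) = 1"
    and g0: "0 \<le> g" and g1: "g < 1"
begin

definition "M = mat 1 - g *\<^sub>R P"
definition "R = matrix_inv M"

lemma M_apply: "(M *v x)$s = x$s - g * (\<Sum>t\<in>UNIV. P$s$t * x$t)"
proof -
  have "(M *v x)$s = (\<Sum>t\<in>UNIV. ((if s = t then 1 else 0) - g * P$s$t) * x$t)"
    by (simp add: M_def matrix_vector_mult_def mat_def)
  also have "\<dots> = (\<Sum>t\<in>UNIV. (if s = t then x$t else 0) - g * (P$s$t * x$t))"
    by (intro sum.cong) (auto simp: algebra_simps)
  also have "\<dots> = (\<Sum>t\<in>UNIV. (if s = t then x$t else 0)) - (\<Sum>t\<in>UNIV. g * (P$s$t * x$t))"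
    by (simp only: sum_subtractf)
  also have "\<dots> = x$s - g * (\<Sum>t\<in>UNIV. P$s$t * x$t)"
    by (simp add: sum_distrib_left)
  finally show ?thesis .
qed

lemma avg_le: assumes "\<And>t. x$t \<le> m" shows "(\<Sum>t\<in>UNIV. P$s$t * x$t) \<le> m"
proof -
  have "(\<Sum>t\<in>UNIV. P$s$t * x$t) \<le> (\<Sum>t\<in>UNIV. P$s$t * m)"
    by (intro sum_mono mult_left_mono assms nn)
  also have "\<dots> = m" by (simp add: sum_distrib_right[symmetric] rs)
  finally show ?thesis .
qed

lemma avg_ge: assumes "\<And>t. m \<le> x$t" shows "m \<le> (\<Sum>t\<in>UNIV. P$s$t * x$t)"
proof -
  have "(\<Sum>t\<in>UNIV. P$s$t * m) \<le> (\<Sum>t\<in>UNIV. P$s$t * x$t)"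
    by (intro sum_mono mult_left_mono assms nn)
  moreover have "(\<Sum>t\<in>UNIV. P$s$t * m) = m" by (simp add: sum_distrib_right[symmetric] rs)
  ultimately show ?thesis by simp
qed

lemma M_inj: assumes "M *v x = 0" shows "x = 0"
proof -
  define m where "m = Max (range (\<lambda>t. \<bar>x$t\<bar>))"
  have mx: "\<And>t. \<bar>x$t\<bar> \<le> m" unfolding m_def by (intro Max_ge) auto
  have "m \<in> range (\<lambda>t. \<bar>x$t\<bar>)" unfolding m_def by (intro Max_in) auto
  then obtain s where s: "\<bar>x$s\<bar> = m" by auto
  have "x$s = g * (\<Sum>t\<in>UNIV. P$s$t * x$t)" using M_apply[of x s] assms by simp
  hence "\<bar>x$s\<bar> = g * \<bar>\<Sum>t\<in>UNIV. P$s$t * x$t\<bar>" using g0 by (simp add: abs_mult)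
  also have "\<bar>\<Sum>t\<in>UNIV. P$s$t * x$t\<bar> \<le> m"
  proof -
    have "(\<Sum>t\<in>UNIV. P$s$t * x$t) \<le> m" using mx by (intro avg_le) (metis abs_ge_self order_trans)
    moreover have "-m \<le> (\<Sum>t\<in>UNIV. P$s$t * x$t)" using mx by (intro avg_ge) (metis abs_le_iff minus_le_iff)
    ultimately show ?thesis by simp
  qed
  finally have "m \<le> g * m" using s g0 by (simp add: mult_left_mono)
  hence "(1 - g) * m \<le> 0" by (simp add: algebra_simps)
  hence "m \<le> 0" using g1 by (simp add: mult_le_0_iff)
  hence "\<And>t. x$t = 0" using mx by (metis abs_le_zero_iff order_trans)
  thus ?thesis by (simp add: vec_eq_iff)
qed

lemma M_invertible: "invertible M"
  unfolding invertible_left_inverse matrix_left_invertible_ker using M_inj by blast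

lemma RM: "R ** M = mat 1" and MR: "M ** R = mat 1"
proof -
  have "M ** R = mat 1 \<and> R ** M = mat 1"
    unfolding R_def matrix_inv_def
    using M_invertible unfolding invertible_def by (rule someI_ex)
  thus "R ** M = mat 1" "M ** R = mat 1" by auto
qed

lemma MR_v: "M *v (R *v y) = y" by (simp add: matrix_vector_mul_assoc MR)
lemma RM_v: "R *v (M *v y) = y" by (simp add: matrix_vector_mul_assoc RM)

lemma R_eq: "(R *v y)$s = y$s + g * (\<Sum>t\<in>UNIV. P$s$t * (R *v y)$t)"
  using M_apply[of "R *v y" s] MR_v[of y] by simp

lemma R_pos: assumes "\<And>t. 0 \<le> y$t" shows "0 \<le> (R *v y)$s"
proof -
  define x where "x = R *v y"
  define m where "m = Min (range (\<lambda>t. x$t))"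
  have mx: "\<And>t. m \<le> x$t" unfolding m_def by (intro Min_le) auto
  have "m \<in> range (\<lambda>t. x$t)" unfolding m_def by (intro Min_in) auto
  then obtain s0 where s0: "x$s0 = m" by auto
  have "x$s0 = y$s0 + g * (\<Sum>t\<in>UNIV. P$s0$t * x$t)" unfolding x_def by (rule R_eq)
  moreover have "g * m \<le> g * (\<Sum>t\<in>UNIV. P$s0$t * x$t)" using avg_ge[OF mx] g0 by (rule mult_left_mono)
  ultimately have "m \<ge> g * m" using assms[of s0] s0 by linarith
  hence "(1 - g) * m \<ge> 0" by (simp add: algebra_simps)
  hence "m \<ge> 0" using g1 by (simp add: zero_le_mult_iff)
  thus ?thesis using mx unfolding x_def by (metis order_trans)
qed

lemma R_ge: assumes "\<And>t. 0 \<le> y$t" shows "y$s \<le> (R *v y)$s"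
proof -
  have "0 \<le> (\<Sum>t\<in>UNIV. P$s$t * (R *v y)$t)"
    using R_pos[OF assms] nn by (intro sum_nonneg mult_nonneg_nonneg) auto
  hence "0 \<le> g * (\<Sum>t\<in>UNIV. P$s$t * (R *v y)$t)" using g0 by simp
  thus ?thesis using R_eq[of y s] by linarith
qed

lemma R_mono: assumes "\<And>t. y$t \<le> z$t" shows "(R *v y)$s \<le> (R *v z)$s"
proof -
  have "0 \<le> (R *v (z - y))$s" using assms by (intro R_pos) simp
  thus ?thesis by (simp add: matrix_vector_mult_diff_distrib)
qed

lemma R_apply: "(R *v y)$s = (\<Sum>t\<in>UNIV. R$s$t * y$t)"
  by (simp add: matrix_vector_mult_def)

lemma R_nn: "0 \<le> R$s$t"
proof -
  have "0 \<le> (R *v axis t 1)$s" by (intro R_pos) (simp add: axis_def)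
  also have "(R *v axis t 1)$s = R$s$t"
    by (simp add: R_apply axis_def if_distrib cong: if_cong)
  finally show ?thesis .
qed

lemma R_row: "(\<Sum>t\<in>UNIV. R$s$t) = 1 / (1 - g)"
proof -
  have "M *v (\<chi> t. 1) = (\<chi> t. 1 - g)"
    by (simp add: vec_eq_iff M_apply rs)
  hence "R *v (\<chi> t. 1 - g) = (\<chi> t. 1)" using RM_v by metis
  hence "(R *v (\<chi> t. 1 - g))$s = 1" by simp
  hence "(\<Sum>t\<in>UNIV. R$s$t * (1 - g)) = 1" by (simp add: R_apply)
  hence "(\<Sum>t\<in>UNIV. R$s$t) * (1 - g) = 1" by (simp add: sum_distrib_right)
  thus ?thesis using g1 by (simp add: field_simps)
qed

lemma ident: "(R *v r) - w = R *v (r + g *\<^sub>R (P *v w) - w)"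
proof -
  have "M *v w = w - g *\<^sub>R (P *v w)"
    by (subst vec_eq_iff, intro allI) (simp only: M_apply vector_minus_component vector_scaleR_component, simp add: matrix_vector_mult_def)
  hence "r + g *\<^sub>R (P *v w) - w = r - M *v w" by simp
  hence "R *v (r + g *\<^sub>R (P *v w) - w) = R *v r - R *v (M *v w)"
    by (simp only: matrix_vector_mult_diff_distrib)
  thus ?thesis by (simp add: RM_v)
qed

lemma fixpt: "R *v r = r + g *\<^sub>R (P *v (R *v r))"
proof -
  have "R *v (r + g *\<^sub>R (P *v (R *v r)) - R *v r) = 0" using ident[of r "R *v r"] by simp
  hence "M *v (R *v (r + g *\<^sub>R (P *v (R *v r)) - R *v r)) = 0" by simp
  hence "r + g *\<^sub>R (P *v (R *v r)) - R *v r = 0" by (simp only: MR_v)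
  thus ?thesis by (simp add: algebra_simps)
qed

lemma jensen:
  assumes p: "p \<ge> 1" and a: "\<And>t. 0 \<le> a$t"
  shows "((R *v a)$s) powr p \<le> (1/(1-g)) powr (p-1) * (R *v (\<chi> t. a$t powr p))$s"
proof -
  define w where "w t = (1 - g) * R$s$t" for t
  have w1: "(\<Sum>t\<in>UNIV. w t) = 1" using R_row[of s] g1 by (simp add: w_def sum_distrib_left[symmetric])
  have w0: "\<And>t. 0 \<le> w t" using R_nn g1 by (simp add: w_def)
  have "(\<Sum>t\<in>UNIV. w t *\<^sub>R a$t) powr p \<le> (\<Sum>t\<in>UNIV. w t * a$t powr p)"
    using a w0 by (intro convex_on_sum[OF _ _ powr_convex0[OF p] w1]) auto
  moreover have "(\<Sum>t\<in>UNIV. w t *\<^sub>R a$t) = (1 - g) * (R *v a)$s"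
    by (simp add: w_def R_apply sum_distrib_left mult.assoc)
  moreover have "(\<Sum>t\<in>UNIV. w t * a$t powr p) = (1 - g) * (R *v (\<chi> t. a$t powr p))$s"
    by (simp add: w_def R_apply sum_distrib_left mult.assoc)
  ultimately have "((1 - g) * (R *v a)$s) powr p \<le> (1 - g) * (R *v (\<chi> t. a$t powr p))$s" by simp
  moreover have "((1 - g) * (R *v a)$s) powr p = (1-g) powr p * ((R *v a)$s) powr p"
    using g1 R_pos[OF a] by (simp add: powr_mult)
  ultimately have "(1-g) powr p * ((R *v a)$s) powr p \<le> (1 - g) * (R *v (\<chi> t. a$t powr p))$s" by simp
  moreover have "(1-g) powr p = (1-g) * (1-g) powr (p-1)"
  proof -
    have "(1-g) powr p = (1-g) powr (1 + (p-1))" by simp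
    also have "\<dots> = (1-g) powr 1 * (1-g) powr (p-1)" by (rule powr_add)
    finally show ?thesis using g1 by simp
  qed
  ultimately have "(1-g) powr (p-1) * ((R *v a)$s) powr p \<le> (R *v (\<chi> t. a$t powr p))$s"
    using g1 by (simp add: mult.assoc)
  hence "(1/(1-g)) powr (p-1) * ((1-g) powr (p-1) * ((R *v a)$s) powr p) \<le> (1/(1-g)) powr (p-1) * (R *v (\<chi> t. a$t powr p))$s"
    by (rule mult_left_mono) simp
  moreover have "(1/(1-g)) powr (p-1) * (1-g) powr (p-1) = 1" using g1 by (simp add: powr_divide)
  ultimately show ?thesis by (simp add: mult.assoc[symmetric])
qed

end


lemma two_pow:
  fixes u w p :: real assumes p: "p \<ge> 1" and "0 \<le> u" "0 \<le> w"
  shows "(u + w) powr p \<le> 2 powr (p - 1) * (u powr p + w powr p)"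
proof -
  have "((1 - 1/2) *\<^sub>R u + (1/2) *\<^sub>R w) powr p \<le> (1 - 1/2) * u powr p + (1/2) * w powr p"
    using assms by (intro convex_onD[OF powr_convex0[OF p]]) auto
  hence h: "((u + w) / 2) powr p \<le> (u powr p + w powr p) / 2" by (simp add: field_simps)
  have e: "u + w = 2 * ((u + w) / 2)" by simp
  have "(u + w) powr p = (2 * ((u + w) / 2)) powr p" using arg_cong[OF e, of "\<lambda>z. z powr p"] .
  also have "\<dots> = 2 powr p * ((u + w) / 2) powr p" using assms by (subst powr_mult) auto
  also have "\<dots> \<le> 2 powr p * ((u powr p + w powr p) / 2)" using h by (intro mult_left_mono) auto
  also have "2 powr p = 2 * 2 powr (p - 1)" by (simp add: powr_diff)
  finally show ?thesis by simp
qed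

lemma one_bound:
  assumes sm: "smat P g" and p: "p \<ge> 1" and a: "\<And>t. 0 \<le> a$t"
    and mu: "\<And>s. 0 \<le> \<mu> s"
    and C: "\<And>t. (1 - g) * (\<Sum>s\<in>UNIV. \<mu> s * smat.R P g $ s $ t) \<le> C * \<nu> t"
  shows "(\<Sum>s\<in>UNIV. \<mu> s * ((smat.R P g *v a)$s) powr p)
     \<le> C / (1-g) powr p * (\<Sum>t\<in>UNIV. \<nu> t * a$t powr p)"
proof -
  interpret smat P g by fact
  define c where "c = (1/(1-g)) powr (p-1)"
  have "(\<Sum>s\<in>UNIV. \<mu> s * ((R *v a)$s) powr p) \<le> (\<Sum>s\<in>UNIV. \<mu> s * (c * (R *v (\<chi> t. a$t powr p))$s))"
    unfolding c_def by (intro sum_mono mult_left_mono jensen[OF p a] mu)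
  also have "\<dots> = c * (\<Sum>s\<in>UNIV. \<Sum>t\<in>UNIV. \<mu> s * R$s$t * a$t powr p)"
    by (simp add: R_apply sum_distrib_left mult_ac)
  also have "\<dots> = c * (\<Sum>t\<in>UNIV. \<Sum>s\<in>UNIV. \<mu> s * R$s$t * a$t powr p)"
    by (subst sum.swap) (rule refl)
  also have "\<dots> = c * (\<Sum>t\<in>UNIV. (\<Sum>s\<in>UNIV. \<mu> s * R$s$t) * a$t powr p)"
    by (simp add: sum_distrib_right)
  also have "\<dots> \<le> c * (\<Sum>t\<in>UNIV. (C * \<nu> t / (1 - g)) * a$t powr p)"
  proof (intro mult_left_mono sum_mono mult_right_mono)
    fix t
    show "(\<Sum>s\<in>UNIV. \<mu> s * R$s$t) \<le> C * \<nu> t / (1 - g)"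
      using C[of t] g1 by (simp add: field_simps)
  qed (auto simp: c_def)
  also have "\<dots> = c / (1 - g) * C * (\<Sum>t\<in>UNIV. \<nu> t * a$t powr p)"
    by (simp add: sum_distrib_left mult_ac)
  also have "c / (1 - g) = 1 / (1-g) powr p"
  proof -
    have "(1-g) powr p = (1-g) powr ((p-1) + 1)" by simp
    also have "\<dots> = (1-g) powr (p-1) * (1-g) powr 1" by (rule powr_add)
    finally have "(1-g) powr p = (1-g) powr (p-1) * (1-g)" using g1 by simp
    thus ?thesis using g1 by (simp add: c_def powr_divide)
  qed
  finally show ?thesis by simp
qed

lemma final_bound:
  assumes sm1: "smat P1 g" and sm2: "smat P2 g" and p: "p \<ge> 1"
    and a: "\<And>t. 0 \<le> a$t" and b: "\<And>t. 0 \<le> b$t"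
    and x: "\<And>s. 0 \<le> x s" "\<And>s. x s \<le> (smat.R P1 g *v a)$s + (smat.R P2 g *v b)$s"
    and mu: "\<And>s. 0 \<le> \<mu> s"
    and C1: "\<And>t. (1 - g) * (\<Sum>s\<in>UNIV. \<mu> s * smat.R P1 g $ s $ t) \<le> C * \<nu> t"
    and C2: "\<And>t. (1 - g) * (\<Sum>s\<in>UNIV. \<mu> s * smat.R P2 g $ s $ t) \<le> C * \<nu> t"
  shows "(\<Sum>s\<in>UNIV. \<mu> s * x s powr p)
     \<le> 2 powr (p - 1) * C / (1-g) powr p * ((\<Sum>t\<in>UNIV. \<nu> t * a$t powr p) + (\<Sum>t\<in>UNIV. \<nu> t * b$t powr p))"
proof -
  have pos1: "\<And>s. 0 \<le> (smat.R P1 g *v a)$s" using smat.R_pos[OF sm1] a by blast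
  have pos2: "\<And>s. 0 \<le> (smat.R P2 g *v b)$s" using smat.R_pos[OF sm2] b by blast
  have "(\<Sum>s\<in>UNIV. \<mu> s * x s powr p) \<le> (\<Sum>s\<in>UNIV. \<mu> s * (2 powr (p - 1) *
      (((smat.R P1 g *v a)$s) powr p + ((smat.R P2 g *v b)$s) powr p)))"
  proof (intro sum_mono mult_left_mono mu)
    fix s
    have "x s powr p \<le> ((smat.R P1 g *v a)$s + (smat.R P2 g *v b)$s) powr p"
      using x p by (intro powr_mono2) auto
    also have "\<dots> \<le> 2 powr (p - 1) * (((smat.R P1 g *v a)$s) powr p + ((smat.R P2 g *v b)$s) powr p)"
      by (intro two_pow p pos1 pos2)
    finally show "x s powr p \<le> \<dots>" .
  qed
  also have "\<dots> = 2 powr (p - 1) * ((\<Sum>s\<in>UNIV. \<mu> s * ((smat.R P1 g *v a)$s) powr p)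
       + (\<Sum>s\<in>UNIV. \<mu> s * ((smat.R P2 g *v b)$s) powr p))"
    by (simp add: sum_distrib_left sum.distrib algebra_simps)
  also have "\<dots> \<le> 2 powr (p - 1) * (C / (1-g) powr p * (\<Sum>t\<in>UNIV. \<nu> t * a$t powr p)
       + C / (1-g) powr p * (\<Sum>t\<in>UNIV. \<nu> t * b$t powr p))"
    by (intro mult_left_mono add_mono one_bound[OF sm1 p a mu C1] one_bound[OF sm2 p b mu C2]) auto
  finally show ?thesis by (simp add: algebra_simps)
qed



locale game =
  fixes N :: nat and A :: "nat \<Rightarrow> 's::finite \<Rightarrow> 'a set" and K :: "'s \<Rightarrow> (nat \<Rightarrow> 'a) \<Rightarrow> 's \<Rightarrow> real"
    and r :: "nat \<Rightarrow> 's \<Rightarrow> (nat \<Rightarrow> 'a) \<Rightarrow> real" and gam :: real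
  assumes actions: "\<forall>i\<in>{1..N}. \<forall>s. finite (A i s) \<and> A i s \<noteq> {}"
    and kernel: "\<forall>s. \<forall>a\<in>joint_actions N A s. (\<forall>s'. 0 \<le> K s a s') \<and> (\<Sum>s'\<in>UNIV. K s a s') = 1"
    and gam0: "0 \<le> gam" and gam1: "gam < 1"
begin

lemma fin_A: "i \<in> {1..N} \<Longrightarrow> finite (A i s)" using actions by auto
lemma ne_A: "i \<in> {1..N} \<Longrightarrow> A i s \<noteq> {}" using actions by auto

lemma fin_J: "finite (joint_actions N A s)"
  unfolding joint_actions_def using fin_A by (intro finite_PiE) auto

lemma jprob_nn: assumes "is_joint_strategy N A \<pi>'" "a \<in> joint_actions N A s"
  shows "0 \<le> jprob N \<pi>' s a"
  unfolding jprob_def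
proof (intro prod_nonneg)
  fix j assume j: "j \<in> {1..N}"
  hence "a j \<in> A j s" using assms(2) unfolding joint_actions_def by (auto simp: PiE_iff)
  thus "0 \<le> \<pi>' j s (a j)" using assms(1) j unfolding is_joint_strategy_def is_strategy_def by blast
qed

lemma jprob_sum: assumes "is_joint_strategy N A \<pi>'"
  shows "(\<Sum>a\<in>joint_actions N A s. jprob N \<pi>' s a) = 1"
proof -
  have "(\<Sum>a\<in>joint_actions N A s. jprob N \<pi>' s a) = (\<Prod>j\<in>{1..N}. \<Sum>x\<in>A j s. \<pi>' j s x)"
    unfolding joint_actions_def jprob_def using fin_A
    by (subst prod_sum_PiE) auto
  also have "\<dots> = (\<Prod>j\<in>{1..N}. 1)"
    using assms unfolding is_joint_strategy_def is_strategy_def by (intro prod.cong) auto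
  finally show ?thesis by simp
qed

lemma smat_P: assumes "is_joint_strategy N A \<pi>'" shows "smat (Pmat N A K \<pi>') gam"
proof
  fix s t
  show "0 \<le> Pmat N A K \<pi>' $ s $ t"
    unfolding Pmat_def P_pi_def using jprob_nn[OF assms] kernel
    by (auto intro!: sum_nonneg mult_nonneg_nonneg)
next
  fix s
  have "(\<Sum>t\<in>UNIV. Pmat N A K \<pi>' $ s $ t) = (\<Sum>t\<in>UNIV. \<Sum>a\<in>joint_actions N A s. jprob N \<pi>' s a * K s a t)"
    by (simp add: Pmat_def P_pi_def)
  also have "\<dots> = (\<Sum>a\<in>joint_actions N A s. \<Sum>t\<in>UNIV. jprob N \<pi>' s a * K s a t)"
    by (rule sum.swap)
  also have "\<dots> = (\<Sum>a\<in>joint_actions N A s. jprob N \<pi>' s a)"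
    using kernel by (intro sum.cong) (auto simp: sum_distrib_left[symmetric])
  finally show "(\<Sum>t\<in>UNIV. Pmat N A K \<pi>' $ s $ t) = 1" using jprob_sum[OF assms] by simp
qed (use gam0 gam1 in auto)

lemma resolvent_eq: "is_joint_strategy N A \<pi>' \<Longrightarrow> resolvent N A K gam \<pi>' = smat.R (Pmat N A K \<pi>') gam"
  by (simp add: resolvent_def smat.R_def[OF smat_P] smat.M_def[OF smat_P])

definition "rvec i \<pi>' = (\<chi> t. r_pi N A r i \<pi>' t)"

lemma gv_eq: "is_joint_strategy N A \<pi>' \<Longrightarrow> game_value N A K r gam i \<pi>' s = (smat.R (Pmat N A K \<pi>') gam *v rvec i \<pi>')$s"
  by (simp add: game_value_def resolvent_eq rvec_def)

lemma bell_eq: "bellman N A K r gam i \<pi>' w s = (rvec i \<pi>' + gam *\<^sub>R (Pmat N A K \<pi>' *v (\<chi> t. w t)))$s"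
  by (simp add: bellman_def Pmat_def matrix_vector_mult_def rvec_def)

lemma value_diff: assumes "is_joint_strategy N A \<pi>'"
  shows "game_value N A K r gam i \<pi>' s - w s
    = (smat.R (Pmat N A K \<pi>') gam *v (\<chi> t. bellman N A K r gam i \<pi>' w t - w t))$s"
proof -
  interpret smat "Pmat N A K \<pi>'" gam by (rule smat_P[OF assms])
  have "(\<chi> t. bellman N A K r gam i \<pi>' w t - w t) = rvec i \<pi>' + gam *\<^sub>R (Pmat N A K \<pi>' *v (\<chi> t. w t)) - (\<chi> t. w t)"
    by (simp add: vec_eq_iff bell_eq)
  hence "(R *v (\<chi> t. bellman N A K r gam i \<pi>' w t - w t)) = R *v rvec i \<pi>' - (\<chi> t. w t)"
    by (simp add: ident)
  thus ?thesis by (simp add: gv_eq[OF assms])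
qed

lemma value_fix: assumes "is_joint_strategy N A \<pi>'"
  shows "bellman N A K r gam i \<pi>' (game_value N A K r gam i \<pi>') s = game_value N A K r gam i \<pi>' s"
proof -
  interpret smat "Pmat N A K \<pi>'" gam by (rule smat_P[OF assms])
  have e: "(\<chi> t. game_value N A K r gam i \<pi>' t) = R *v rvec i \<pi>'"
    by (simp add: vec_eq_iff gv_eq[OF assms])
  show ?thesis
    using arg_cong[OF fixpt[of "rvec i \<pi>'"], of "\<lambda>x. x $ s"]
    by (simp add: bell_eq e gv_eq[OF assms])
qed

lemma decomp:
  assumes i: "i \<in> {1..N}"
  shows "(\<Sum>a\<in>joint_actions N A s. jprob N (\<pi>(i:=\<sigma>)) s a * f a)
    = (\<Sum>ai\<in>A i s. \<sigma> s ai * (\<Sum>a\<in>{a\<in>joint_actions N A s. a i = ai}. (\<Prod>j\<in>{1..N}-{i}. \<pi> j s (a j)) * f a))"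
proof -
  have jp: "jprob N (\<pi>(i:=\<sigma>)) s a = \<sigma> s (a i) * (\<Prod>j\<in>{1..N}-{i}. \<pi> j s (a j))" for a
  proof -
    have "jprob N (\<pi>(i:=\<sigma>)) s a = (\<pi>(i:=\<sigma>)) i s (a i) * (\<Prod>j\<in>{1..N}-{i}. (\<pi>(i:=\<sigma>)) j s (a j))"
      unfolding jprob_def using i by (subst prod.remove[of _ i]) auto
    also have "(\<Prod>j\<in>{1..N}-{i}. (\<pi>(i:=\<sigma>)) j s (a j)) = (\<Prod>j\<in>{1..N}-{i}. \<pi> j s (a j))"
      by (intro prod.cong) auto
    finally show ?thesis by (simp only: fun_upd_same)
  qed
  have img: "(\<lambda>a. a i) ` joint_actions N A s \<subseteq> A i s"
    using i unfolding joint_actions_def by (auto simp: PiE_iff)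
  have "(\<Sum>a\<in>joint_actions N A s. jprob N (\<pi>(i:=\<sigma>)) s a * f a)
     = (\<Sum>ai\<in>A i s. \<Sum>a\<in>{a\<in>joint_actions N A s. a i = ai}. jprob N (\<pi>(i:=\<sigma>)) s a * f a)"
    by (rule sum.group[symmetric, OF fin_J fin_A[OF i] img])
  also have "\<dots> = (\<Sum>ai\<in>A i s. \<sigma> s ai * (\<Sum>a\<in>{a\<in>joint_actions N A s. a i = ai}. (\<Prod>j\<in>{1..N}-{i}. \<pi> j s (a j)) * f a))"
    by (intro sum.cong refl) (auto simp: jp sum_distrib_left mult.assoc intro!: sum.cong)
  finally show ?thesis .
qed

end

locale player = game N A K r gam
  for N :: nat and A :: "nat \<Rightarrow> 's::finite \<Rightarrow> 'a set" and K r gam +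
  fixes i :: nat and \<pi> :: "nat \<Rightarrow> 's \<Rightarrow> 'a \<Rightarrow> real"
  assumes i: "i \<in> {1..N}" and pi: "is_joint_strategy N A \<pi>"
begin

definition "Q w s ai = r_mi N A r i \<pi> s ai + gam * (\<Sum>s'\<in>UNIV. P_mi N A K i \<pi> s ai s' * w s')"

lemma opt_eq: "bellman_opt N A K r gam i \<pi> w s = Max (Q w s ` A i s)"
  by (simp add: bellman_opt_def Q_def)

lemma bell_decomp:
  "bellman N A K r gam i (\<pi>(i:=\<sigma>)) w s = (\<Sum>ai\<in>A i s. \<sigma> s ai * Q w s ai)"
proof -
  have r: "r_pi N A r i (\<pi>(i:=\<sigma>)) s = (\<Sum>ai\<in>A i s. \<sigma> s ai * r_mi N A r i \<pi> s ai)"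
    unfolding r_pi_def r_mi_def by (rule decomp[OF i])
  have P: "P_pi N A K (\<pi>(i:=\<sigma>)) s s' = (\<Sum>ai\<in>A i s. \<sigma> s ai * P_mi N A K i \<pi> s ai s')" for s'
    unfolding P_pi_def P_mi_def by (rule decomp[OF i])
  have "(\<Sum>s'\<in>UNIV. P_pi N A K (\<pi>(i:=\<sigma>)) s s' * w s')
      = (\<Sum>s'\<in>UNIV. \<Sum>ai\<in>A i s. \<sigma> s ai * P_mi N A K i \<pi> s ai s' * w s')"
    by (simp add: P sum_distrib_right)
  also have "\<dots> = (\<Sum>ai\<in>A i s. \<Sum>s'\<in>UNIV. \<sigma> s ai * P_mi N A K i \<pi> s ai s' * w s')"
    by (rule sum.swap)
  also have "\<dots> = (\<Sum>ai\<in>A i s. \<sigma> s ai * (\<Sum>s'\<in>UNIV. P_mi N A K i \<pi> s ai s' * w s'))"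
    by (simp add: sum_distrib_left mult.assoc)
  finally have P2: "(\<Sum>s'\<in>UNIV. P_pi N A K (\<pi>(i:=\<sigma>)) s s' * w s') = \<dots>" .
  show ?thesis
    unfolding bellman_def r P2 Q_def
    by (simp add: sum.distrib sum_distrib_left algebra_simps)
qed

lemma strat_upd: "is_strategy A i \<sigma> \<Longrightarrow> is_joint_strategy N A (\<pi>(i:=\<sigma>))"
  using pi unfolding is_joint_strategy_def by auto

lemma bell_le_opt: assumes "is_strategy A i \<sigma>"
  shows "bellman N A K r gam i (\<pi>(i:=\<sigma>)) w s \<le> bellman_opt N A K r gam i \<pi> w s"
proof -
  have "(\<Sum>ai\<in>A i s. \<sigma> s ai * Q w s ai) \<le> (\<Sum>ai\<in>A i s. \<sigma> s ai * Max (Q w s ` A i s))"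
    using assms fin_A[OF i] unfolding is_strategy_def
    by (intro sum_mono mult_left_mono Max_ge) auto
  also have "\<dots> = Max (Q w s ` A i s)"
    using assms unfolding is_strategy_def by (simp add: sum_distrib_right[symmetric])
  finally show ?thesis by (simp add: bell_decomp opt_eq)
qed

definition "V \<sigma> s = game_value N A K r gam i (\<pi>(i:=\<sigma>)) s"
definition "dpol d = (\<lambda>s a. if a = d s then 1 else (0::real))"
definition "D = {d. \<forall>s. d s \<in> A i s}"

lemma dpol_strat: "d \<in> D \<Longrightarrow> is_strategy A i (dpol d)"
  unfolding is_strategy_def dpol_def D_def using fin_A[OF i] by auto

lemma bell_dpol: "d \<in> D \<Longrightarrow> bellman N A K r gam i (\<pi>(i:=dpol d)) w s = Q w s (d s)"
proof -
  assume d: "d \<in> D"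
  have "(\<Sum>ai\<in>A i s. dpol d s ai * Q w s ai) = (\<Sum>ai\<in>A i s. if d s = ai then Q w s ai else 0)"
    unfolding dpol_def by (intro sum.cong) auto
  also have "\<dots> = Q w s (d s)" using d fin_A[OF i] unfolding D_def by (simp add: sum.delta)
  finally show ?thesis by (simp add: bell_decomp)
qed

lemma finD: "finite D"
proof -
  have "D = PiE UNIV (\<lambda>s. A i s)" unfolding D_def by (auto simp: PiE_def Pi_def extensional_def)
  thus ?thesis using fin_A[OF i] by (simp add: finite_PiE)
qed

lemma neD: "D \<noteq> {}"
proof -
  have "(\<lambda>s. SOME a. a \<in> A i s) \<in> D" unfolding D_def using ne_A[OF i] by (simp add: some_in_eq)
  thus ?thesis by auto
qed

lemma opt_exists: "\<exists>d0\<in>D. \<forall>\<sigma>. is_strategy A i \<sigma> \<longrightarrow> (\<forall>s. V \<sigma> s \<le> V (dpol d0) s)"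
proof -
  define F where "F d = (\<Sum>s\<in>UNIV. V (dpol d) s)" for d
  have "Max (F ` D) \<in> F ` D" using finD neD by (intro Max_in) auto
  then obtain d0 where d0: "d0 \<in> D" "F d0 = Max (F ` D)" by auto
  have Fmax: "F d \<le> F d0" if "d \<in> D" for d using d0 that finD by auto
  define w where "w = V (dpol d0)"
  have js0: "is_joint_strategy N A (\<pi>(i:=dpol d0))" by (rule strat_upd[OF dpol_strat[OF d0(1)]])
  have wfix: "bellman N A K r gam i (\<pi>(i:=dpol d0)) w s = w s" for s
    unfolding w_def V_def using value_fix[OF js0] by simp
  have opt: "bellman_opt N A K r gam i \<pi> w s \<le> w s" for s
  proof (rule ccontr)
    assume "\<not> ?thesis"
    hence s0: "w s < bellman_opt N A K r gam i \<pi> w s" by simp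
    have ex: "\<exists>a. a \<in> A i t \<and> Q w t a = Max (Q w t ` A i t)" for t
    proof -
      have "Max (Q w t ` A i t) \<in> Q w t ` A i t" using fin_A[OF i] ne_A[OF i] by (intro Max_in) auto
      thus ?thesis by auto
    qed
    define d' where "d' t = (SOME a. a \<in> A i t \<and> Q w t a = Max (Q w t ` A i t))" for t
    have d': "d' t \<in> A i t \<and> Q w t (d' t) = Max (Q w t ` A i t)" for t
      unfolding d'_def using ex[of t] by (rule someI_ex)
    have d'D: "d' \<in> D" unfolding D_def using d' by auto
    have js': "is_joint_strategy N A (\<pi>(i:=dpol d'))" by (rule strat_upd[OF dpol_strat[OF d'D]])
    define y where "y t = bellman N A K r gam i (\<pi>(i:=dpol d')) w t - w t" for t
    have yeq: "y t = bellman_opt N A K r gam i \<pi> w t - w t" for t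
      unfolding y_def bell_dpol[OF d'D] opt_eq using d' by simp
    have y0: "0 \<le> y t" for t
    proof -
      have "w t = Q w t (d0 t)" using wfix[of t] bell_dpol[OF d0(1)] by simp
      also have "\<dots> \<le> Max (Q w t ` A i t)" using fin_A[OF i] d0(1) unfolding D_def by (intro Max_ge) auto
      finally show ?thesis by (simp add: yeq opt_eq)
    qed
    interpret sm: smat "Pmat N A K (\<pi>(i:=dpol d'))" gam by (rule smat_P[OF js'])
    have dif: "V (dpol d') t - w t \<ge> y t" for t
    proof -
      have "V (dpol d') t - w t = (sm.R *v (\<chi> t. y t))$t"
        unfolding V_def y_def by (rule value_diff[OF js'])
      also have "\<dots> \<ge> (\<chi> t. y t)$t" by (rule sm.R_ge) (simp add: y0)
      finally show ?thesis by simp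
    qed
    have "y s \<le> (\<Sum>t\<in>UNIV. y t)" using y0 by (intro member_le_sum) auto
    also have "\<dots> \<le> (\<Sum>t\<in>UNIV. V (dpol d') t - w t)" by (intro sum_mono dif)
    also have "\<dots> = F d' - F d0" by (simp add: F_def w_def sum_subtractf)
    finally have "y s \<le> F d' - F d0" .
    moreover have "0 < y s" using s0 yeq by simp
    ultimately show False using Fmax[OF d'D] by simp
  qed
  have "V \<sigma> s \<le> V (dpol d0) s" if \<sigma>: "is_strategy A i \<sigma>" for \<sigma> s
  proof -
    have js: "is_joint_strategy N A (\<pi>(i:=\<sigma>))" by (rule strat_upd[OF \<sigma>])
    interpret sm: smat "Pmat N A K (\<pi>(i:=\<sigma>))" gam by (rule smat_P[OF js])
    have "V \<sigma> s - w s = (sm.R *v (\<chi> t. bellman N A K r gam i (\<pi>(i:=\<sigma>)) w t - w t))$s"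
      unfolding V_def by (rule value_diff[OF js])
    also have "\<dots> \<le> (sm.R *v 0)$s"
    proof (rule sm.R_mono)
      fix t show "(\<chi> t. bellman N A K r gam i (\<pi>(i:=\<sigma>)) w t - w t) $ t \<le> (0::real^'s) $ t"
        using bell_le_opt[OF \<sigma>, of w t] opt[of t] by simp
    qed
    finally show ?thesis by (simp add: w_def)
  qed
  thus ?thesis using d0(1) by blast
qed

end


context player begin

lemma player_bound:
  assumes p: "p \<ge> 1" and mu: "\<And>s. 0 \<le> \<mu> s"
    and Cb: "\<And>\<pi>' t. is_joint_strategy N A \<pi>' \<Longrightarrow>
        (1 - gam) * (\<Sum>s\<in>UNIV. \<mu> s * resolvent N A K gam \<pi>' $ s $ t) \<le> C * \<nu> t"
  shows "(\<Sum>s\<in>UNIV. \<mu> s * \<bar>best_value N A K r gam i \<pi> s - game_value N A K r gam i \<pi> s\<bar> powr p)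
   \<le> 2 powr (p - 1) * C / (1 - gam) powr p *
      ((\<Sum>t\<in>UNIV. \<nu> t * \<bar>bellman_opt N A K r gam i \<pi> v t - v t\<bar> powr p)
     + (\<Sum>t\<in>UNIV. \<nu> t * \<bar>bellman N A K r gam i \<pi> v t - v t\<bar> powr p))"
proof -
  obtain d0 where d0: "d0 \<in> D" and opt: "\<And>\<sigma> s. is_strategy A i \<sigma> \<Longrightarrow> V \<sigma> s \<le> V (dpol d0) s"
    using opt_exists by blast
  have js0: "is_joint_strategy N A (\<pi>(i:=dpol d0))" by (rule strat_upd[OF dpol_strat[OF d0]])
  have spi: "is_strategy A i (\<pi> i)" using pi i unfolding is_joint_strategy_def by blast
  have best: "best_value N A K r gam i \<pi> s = V (dpol d0) s" for s
    unfolding best_value_def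
    by (rule cSup_eq_maximum) (use dpol_strat[OF d0] opt in \<open>auto simp: V_def\<close>)
  have vpi: "game_value N A K r gam i \<pi> s = V (\<pi> i) s" for s by (simp add: V_def)
  define e1 where "e1 t = bellman_opt N A K r gam i \<pi> v t - v t" for t
  define e2 where "e2 t = bellman N A K r gam i \<pi> v t - v t" for t
  define x where "x s = \<bar>best_value N A K r gam i \<pi> s - game_value N A K r gam i \<pi> s\<bar>" for s
  interpret s1: smat "Pmat N A K (\<pi>(i:=dpol d0))" gam by (rule smat_P[OF js0])
  interpret s2: smat "Pmat N A K \<pi>" gam by (rule smat_P[OF pi])
  have xb: "x s \<le> (s1.R *v (\<chi> t. \<bar>e1 t\<bar>))$s + (s2.R *v (\<chi> t. \<bar>e2 t\<bar>))$s" for s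
  proof -
    have nn: "0 \<le> best_value N A K r gam i \<pi> s - game_value N A K r gam i \<pi> s"
      using opt[OF spi, of s] by (simp add: best vpi)
    have h1: "best_value N A K r gam i \<pi> s - game_value N A K r gam i \<pi> s
       = (V (dpol d0) s - v s) - (game_value N A K r gam i \<pi> s - v s)" by (simp add: best)
    have "V (dpol d0) s - v s = (s1.R *v (\<chi> t. bellman N A K r gam i (\<pi>(i:=dpol d0)) v t - v t))$s"
      unfolding V_def by (rule value_diff[OF js0])
    also have "\<dots> \<le> (s1.R *v (\<chi> t. \<bar>e1 t\<bar>))$s"
    proof (rule s1.R_mono)
      fix t show "(\<chi> t. bellman N A K r gam i (\<pi>(i:=dpol d0)) v t - v t)$t \<le> (\<chi> t. \<bar>e1 t\<bar>)$t"
        using bell_le_opt[OF dpol_strat[OF d0], of v t] by (simp add: e1_def)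
    qed
    finally have h2: "V (dpol d0) s - v s \<le> (s1.R *v (\<chi> t. \<bar>e1 t\<bar>))$s" .
    have h3: "game_value N A K r gam i \<pi> s - v s = (s2.R *v (\<chi> t. e2 t))$s"
      unfolding e2_def by (rule value_diff[OF pi])
    have "(s2.R *v (\<chi> t. - \<bar>e2 t\<bar>))$s \<le> (s2.R *v (\<chi> t. e2 t))$s"
      by (rule s2.R_mono) simp
    hence h4: "- (s2.R *v (\<chi> t. e2 t))$s \<le> (s2.R *v (\<chi> t. \<bar>e2 t\<bar>))$s"
      by (simp add: s2.R_apply sum_negf)
    have "x s = best_value N A K r gam i \<pi> s - game_value N A K r gam i \<pi> s"
      unfolding x_def using nn by simp
    thus ?thesis using h1 h2 h3 h4 by linarith
  qed
  have C1: "(1 - gam) * (\<Sum>s\<in>UNIV. \<mu> s * s1.R $ s $ t) \<le> C * \<nu> t" for t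
    using Cb[OF js0, of t] by (simp add: resolvent_eq[OF js0])
  have C2: "(1 - gam) * (\<Sum>s\<in>UNIV. \<mu> s * s2.R $ s $ t) \<le> C * \<nu> t" for t
    using Cb[OF pi, of t] by (simp add: resolvent_eq[OF pi])
  have "(\<Sum>s\<in>UNIV. \<mu> s * x s powr p) \<le> 2 powr (p - 1) * C / (1-gam) powr p *
     ((\<Sum>t\<in>UNIV. \<nu> t * (\<chi> t. \<bar>e1 t\<bar>)$t powr p) + (\<Sum>t\<in>UNIV. \<nu> t * (\<chi> t. \<bar>e2 t\<bar>)$t powr p))"
    by (rule final_bound[OF smat_P[OF js0] smat_P[OF pi] p _ _ _ xb mu C1 C2]) (auto simp: x_def)
  thus ?thesis by (simp add: x_def e1_def e2_def)
qed

end


lemma wn_pow: assumes "\<And>s. 0 \<le> \<mu> s" "p > 0"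
  shows "wnorm \<mu> p f powr p = (\<Sum>s\<in>UNIV. \<mu> s * \<bar>f s\<bar> powr p)"
proof -
  have "0 \<le> (\<Sum>s\<in>UNIV. \<mu> s * \<bar>f s\<bar> powr p)" using assms by (intro sum_nonneg) auto
  thus ?thesis using assms(2) unfolding wnorm_def by (simp add: powr_powr)
qed

lemma wn_nn: "0 \<le> wnorm \<mu> p f powr p" by simp

theorem theorem1:
  fixes N :: nat
    and A :: "nat \<Rightarrow> 's::finite \<Rightarrow> 'a set"
    and K :: "'s \<Rightarrow> (nat \<Rightarrow> 'a) \<Rightarrow> 's \<Rightarrow> real"
    and r :: "nat \<Rightarrow> 's \<Rightarrow> (nat \<Rightarrow> 'a) \<Rightarrow> real"
    and gam p p' :: real
    and \<mu> \<nu> :: "'s \<Rightarrow> real"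
    and \<rho> :: "nat \<Rightarrow> real"
    and \<pi> :: "nat \<Rightarrow> 's \<Rightarrow> 'a \<Rightarrow> real"
    and v :: "nat \<Rightarrow> 's \<Rightarrow> real"
  assumes actions: "\<forall>i\<in>{1..N}. \<forall>s. finite (A i s) \<and> A i s \<noteq> {}"
    and kernel: "\<forall>s. \<forall>a\<in>joint_actions N A s. (\<forall>s'. 0 \<le> K s a s') \<and> (\<Sum>s'\<in>UNIV. K s a s') = 1"
    and gam: "0 \<le> gam" "gam < 1"
    and p: "p > 1" "p' > 1" "1 / p + 1 / p' = 1"
    and mu: "is_distribution UNIV \<mu>"
    and nu: "is_distribution UNIV \<nu>" "\<forall>s. \<nu> s > 0"
    and rho: "is_distribution {1..N} \<rho>"
    and pi: "is_joint_strategy N A \<pi>"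
  shows "(\<Sum>i\<in>{1..N}. \<rho> i *
            wnorm \<mu> p (\<lambda>s. best_value N A K r gam i \<pi> s - game_value N A K r gam i \<pi> s) powr p) powr (1 / p)
         \<le> 2 powr (1 / p') * conc N A K gam \<mu> \<nu> powr (1 / p) / (1 - gam) *
           (\<Sum>i\<in>{1..N}. \<rho> i *
              (wnorm \<nu> p (\<lambda>s. bellman_opt N A K r gam i \<pi> (v i) s - v i s) powr p
               + wnorm \<nu> p (\<lambda>s. bellman N A K r gam i \<pi> (v i) s - v i s) powr p)) powr (1 / p)"
proof -
  interpret game N A K r gam using actions kernel gam by unfold_locales auto
  define C where "C = conc N A K gam \<mu> \<nu>"
  have mu0: "\<And>s. 0 \<le> \<mu> s" and mu1: "(\<Sum>s\<in>UNIV. \<mu> s) = 1" using mu by (auto simp: is_distribution_def)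
  have nu0: "\<And>s. 0 < \<nu> s" using nu by auto
  have entry: "((1 - gam) *\<^sub>R ((\<chi> t. \<mu> t) v* resolvent N A K gam \<pi>')) $ t
      = (1 - gam) * (\<Sum>s\<in>UNIV. \<mu> s * resolvent N A K gam \<pi>' $ s $ t)" for \<pi>' t
    by (simp add: vector_matrix_mult_def)
  define B where "B = (\<Sum>t\<in>UNIV. 1 / \<nu> t)"
  have ent_le: "(1 - gam) * (\<Sum>s\<in>UNIV. \<mu> s * resolvent N A K gam \<pi>' $ s $ t) \<le> 1"
    and ent_ge: "0 \<le> (1 - gam) * (\<Sum>s\<in>UNIV. \<mu> s * resolvent N A K gam \<pi>' $ s $ t)"
    if js: "is_joint_strategy N A \<pi>'" for \<pi>' t
  proof -
    interpret sm: smat "Pmat N A K \<pi>'" gam by (rule smat_P[OF js])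
    have R: "resolvent N A K gam \<pi>' = sm.R" by (rule resolvent_eq[OF js])
    have "(1 - gam) * (\<Sum>s\<in>UNIV. \<mu> s * sm.R $ s $ t) = (\<Sum>s\<in>UNIV. \<mu> s * ((1 - gam) * sm.R $ s $ t))"
      by (simp add: sum_distrib_left mult_ac)
    also have "\<dots> \<le> (\<Sum>s\<in>UNIV. \<mu> s * 1)"
    proof (intro sum_mono mult_left_mono mu0)
      fix s
      have "sm.R $ s $ t \<le> (\<Sum>t\<in>UNIV. sm.R $ s $ t)" using sm.R_nn by (intro member_le_sum) auto
      also have "\<dots> = 1 / (1 - gam)" by (rule sm.R_row)
      finally show "(1 - gam) * sm.R $ s $ t \<le> 1" using gam by (simp add: field_simps)
    qed
    finally show "(1 - gam) * (\<Sum>s\<in>UNIV. \<mu> s * resolvent N A K gam \<pi>' $ s $ t) \<le> 1"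
      using mu1 by (simp add: R)
    show "0 \<le> (1 - gam) * (\<Sum>s\<in>UNIV. \<mu> s * resolvent N A K gam \<pi>' $ s $ t)"
      using gam mu0 sm.R_nn by (auto simp: R intro!: sum_nonneg mult_nonneg_nonneg)
  qed
  have cpi_le: "conc_pi N A K gam \<mu> \<nu> \<pi>' \<le> B" if js: "is_joint_strategy N A \<pi>'" for \<pi>'
    unfolding conc_pi_def
  proof (subst Max_le_iff, simp, simp, intro ballI)
    fix y assume "y \<in> range (\<lambda>s. ((1 - gam) *\<^sub>R ((\<chi> t. \<mu> t) v* resolvent N A K gam \<pi>')) $ s / \<nu> s)"
    then obtain t where y: "y = ((1 - gam) *\<^sub>R ((\<chi> t. \<mu> t) v* resolvent N A K gam \<pi>')) $ t / \<nu> t" by auto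
    have "y \<le> 1 / \<nu> t" unfolding y entry using ent_le[OF js, of t] nu0[of t] by (simp add: divide_right_mono)
    also have "\<dots> \<le> B" unfolding B_def using nu0 by (intro member_le_sum) (auto simp: less_imp_le)
    finally show "y \<le> B" .
  qed
  have bdd: "bdd_above ((\<lambda>\<pi>'. conc_pi N A K gam \<mu> \<nu> \<pi>') ` {\<pi>'. is_joint_strategy N A \<pi>'})"
    using cpi_le by (intro bdd_aboveI2) auto
  have Cb: "(1 - gam) * (\<Sum>s\<in>UNIV. \<mu> s * resolvent N A K gam \<pi>' $ s $ t) \<le> C * \<nu> t"
    and Cb0: "0 \<le> C"
    if js: "is_joint_strategy N A \<pi>'" for \<pi>' t
  proof -
    have "((1 - gam) *\<^sub>R ((\<chi> t. \<mu> t) v* resolvent N A K gam \<pi>')) $ t / \<nu> t \<le> conc_pi N A K gam \<mu> \<nu> \<pi>'"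
      unfolding conc_pi_def by (intro Max_ge) auto
    also have "\<dots> \<le> C" unfolding C_def conc_def using js bdd by (intro cSUP_upper) auto
    finally have h: "(1 - gam) * (\<Sum>s\<in>UNIV. \<mu> s * resolvent N A K gam \<pi>' $ s $ t) / \<nu> t \<le> C"
      by (simp only: entry)
    thus "(1 - gam) * (\<Sum>s\<in>UNIV. \<mu> s * resolvent N A K gam \<pi>' $ s $ t) \<le> C * \<nu> t"
      using nu0[of t] by (simp add: divide_le_eq)
    show "0 \<le> C" using h divide_nonneg_pos[OF ent_ge[OF js, of t] nu0[of t]] by linarith
  qed
  have C0: "0 \<le> C" using Cb0[OF pi] .
  define Kc where "Kc = 2 powr (p - 1) * C / (1 - gam) powr p"
  have Kc0: "0 \<le> Kc" unfolding Kc_def using C0 by simp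
  define L where "L i = wnorm \<mu> p (\<lambda>s. best_value N A K r gam i \<pi> s - game_value N A K r gam i \<pi> s) powr p" for i
  define W where "W i = wnorm \<nu> p (\<lambda>s. bellman_opt N A K r gam i \<pi> (v i) s - v i s) powr p
               + wnorm \<nu> p (\<lambda>s. bellman N A K r gam i \<pi> (v i) s - v i s) powr p" for i
  have LW: "L i \<le> Kc * W i" if i: "i \<in> {1..N}" for i
  proof -
    interpret pl: player N A K r gam i \<pi> using i pi by unfold_locales
    have "(\<Sum>s\<in>UNIV. \<mu> s * \<bar>best_value N A K r gam i \<pi> s - game_value N A K r gam i \<pi> s\<bar> powr p)
      \<le> Kc * ((\<Sum>t\<in>UNIV. \<nu> t * \<bar>bellman_opt N A K r gam i \<pi> (v i) t - v i t\<bar> powr p)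
     + (\<Sum>t\<in>UNIV. \<nu> t * \<bar>bellman N A K r gam i \<pi> (v i) t - v i t\<bar> powr p))"
      unfolding Kc_def using p(1) mu0 Cb by (intro pl.player_bound) auto
    thus ?thesis unfolding L_def W_def using mu0 nu0 p(1)
      by (simp add: wn_pow less_imp_le)
  qed
  have rho0: "\<And>i. i \<in> {1..N} \<Longrightarrow> 0 \<le> \<rho> i" using rho by (auto simp: is_distribution_def)
  have W0: "0 \<le> W i" for i unfolding W_def by simp
  have L0: "0 \<le> L i" for i unfolding L_def by simp
  define X where "X = (\<Sum>i\<in>{1..N}. \<rho> i * W i)"
  have X0: "0 \<le> X" unfolding X_def using rho0 W0 by (intro sum_nonneg) auto
  have "(\<Sum>i\<in>{1..N}. \<rho> i * L i) \<le> (\<Sum>i\<in>{1..N}. \<rho> i * (Kc * W i))"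
    using LW rho0 by (intro sum_mono mult_left_mono) auto
  also have "\<dots> = Kc * X" unfolding X_def by (simp add: sum_distrib_left mult_ac)
  finally have S: "(\<Sum>i\<in>{1..N}. \<rho> i * L i) \<le> Kc * X" .
  have "(\<Sum>i\<in>{1..N}. \<rho> i * L i) powr (1 / p) \<le> (Kc * X) powr (1 / p)"
    using S p(1) rho0 L0 by (intro powr_mono2 sum_nonneg mult_nonneg_nonneg) auto
  also have "\<dots> = Kc powr (1 / p) * X powr (1 / p)" using Kc0 X0 by (simp add: powr_mult)
  also have "Kc powr (1 / p) = 2 powr (1 / p') * C powr (1 / p) / (1 - gam)"
  proof -
    have "Kc powr (1 / p) = (2 powr (p - 1)) powr (1 / p) * C powr (1 / p) / ((1 - gam) powr p) powr (1 / p)"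
      unfolding Kc_def using C0 gam by (simp add: powr_mult powr_divide)
    also have "(2 powr (p - 1)) powr (1 / p) = 2 powr (1 / p')"
    proof -
      have "(p - 1) * (1 / p) = 1 / p'" using p by (simp add: field_simps)
      thus ?thesis by (simp add: powr_powr)
    qed
    also have "((1 - gam) powr p) powr (1 / p) = 1 - gam" using p(1) gam by (simp add: powr_powr)
    finally show ?thesis .
  qed
  finally show ?thesis unfolding L_def X_def W_def C_def .
qed


end
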